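(* Let $d\le k$ and let $R$ be a $d\times k$ matrix that is weakly completely-$\mathcal S$ with respect to $f:\{1,\dots,k\}\to\mathcal P(\{1,\dots,d\})$, where $f(j)\ne\emptyset$ for all $j$ and, for each $1\le i\le d$, $f(j)=\{i\}$ iff $j=i$. Then there is a constant $C>0$ depending only on $R$ and $f$ such that the following holds. Whenever $\delta>0$, $0\le t_1<t_2<\infty$, $w,x\in C([t_1,t_2],\mathbb R^d)$ and $y\in C([t_1,t_2],\mathbb R^k)$ satisfy (i) $w(t)=x(t)+Ry(t)$ for all $t\in[t_1,t_2]$; (ii) $w(t)\in\mathbb R^d_{\ge0}$ for all $t\in[t_1,t_2]$; (iii) for each $j$: $y_j(t_1)\ge0$, $y_j$ is nondecreasing, and $\int_{t_1}^{t_2}\mathbf 1(w_i(s)>\delta\text{ for some }i\in f(j))\,dy_j(s)=0$; then $$\mathrm{Osc}(y,[t_1,t_2])\le C\big(\mathrm{Osc}(x,[t_1,t_2])+\delta\big),\qquad \mathrm{Osc}(w,[t_1,t_2])\le C\big(\mathrm{Osc}(x,[t_1,t_2])+\delta\big).$$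
   Context: For $g\in C([t_1,t_2],\mathbb R^m)$, $\mathrm{Osc}(g,[t_1,t_2])=\sup\{\max_{1\le l\le m}|g_l(t)-g_l(s)|: t_1\le s<t\le t_2\}$. Weakly completely-$\mathcal S$: for a $d\times k$ matrix $R$ and $f:\{1,\dots,k\}\to\mathcal P(\{1,\dots,d\})$, for nonempty $I\subseteq\{1,\dots,d\}$ set $J_I=\{1\le j\le k: f(j)\subseteq I\}$ and $R_I=R_{I,J_I}$; $R$ is weakly completely-$\mathcal S$ w.r.t. $f$ if for every nonempty $I$ there is $\lambda_I\in\mathbb R^I_{>0}$ with $(\lambda_I^\top R_I)_j\ge1$ for all $j\in J_I$. *)

theory Defs
  imports "HOL-Analysis.Analysis"
begin

text \<open>Indices are 0-based: coordinates i < d, columns j < k.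
  Matrices are functions nat => nat => real, vector-valued paths are real => nat => real.\<close>

text \<open>Oscillation of a path g with m coordinates on [t1,t2]
  (the extra 0 only matters for m = 0, making Osc = 0 then).\<close>
definition Osc :: "(real \<Rightarrow> nat \<Rightarrow> real) \<Rightarrow> nat \<Rightarrow> real \<Rightarrow> real \<Rightarrow> real" where
  "Osc g m t1 t2 = Sup (insert 0 {\<bar>g t l - g s l\<bar> | s t l. t1 \<le> s \<and> s < t \<and> t \<le> t2 \<and> l < m})"

definition J_set :: "nat \<Rightarrow> (nat \<Rightarrow> nat set) \<Rightarrow> nat set \<Rightarrow> nat set" where
  "J_set k f I = {j. j < k \<and> f j \<subseteq> I}"

definition weakly_completely_S ::
  "nat \<Rightarrow> nat \<Rightarrow> (nat \<Rightarrow> nat \<Rightarrow> real) \<Rightarrow> (nat \<Rightarrow> nat set) \<Rightarrow> bool" where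
  "weakly_completely_S d k R f \<longleftrightarrow>
     (\<forall>I. I \<noteq> {} \<and> I \<subseteq> {..<d} \<longrightarrow>
        (\<exists>lam::nat \<Rightarrow> real. (\<forall>i\<in>I. lam i > 0) \<and>
           (\<forall>j\<in>J_set k f I. (\<Sum>i\<in>I. lam i * R i j) \<ge> 1)))"

definition LS_measure :: "(real \<Rightarrow> real) \<Rightarrow> real \<Rightarrow> real \<Rightarrow> real measure" where
  "LS_measure g t1 t2 = interval_measure (\<lambda>s. g (max t1 (min t2 s)))"

end

theory Submission
  imports Defs
begin

definition good :: "nat \<Rightarrow> nat \<Rightarrow> (nat\<Rightarrow>nat\<Rightarrow>real) \<Rightarrow> (nat \<Rightarrow> nat set) \<Rightarrow> real \<Rightarrow> real \<Rightarrow> real \<Rightarrow> real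
   \<Rightarrow> (real\<Rightarrow>nat\<Rightarrow>real) \<Rightarrow> (real\<Rightarrow>nat\<Rightarrow>real) \<Rightarrow> (real\<Rightarrow>nat\<Rightarrow>real) \<Rightarrow> bool" where
"good d k R f \<delta> E t1 t2 w x y \<longleftrightarrow> 0 < \<delta> \<and> \<delta> \<le> E \<and> t1 \<le> t2 \<and>
  (\<forall>i<d. continuous_on {t1..t2} (\<lambda>t. w t i)) \<and>
  (\<forall>t\<in>{t1..t2}. \<forall>i<d. w t i = x t i + (\<Sum>j<k. R i j * y t j)) \<and>
  (\<forall>t\<in>{t1..t2}. \<forall>i<d. w t i \<ge> 0) \<and>
  (\<forall>j<k. mono_on {t1..t2} (\<lambda>t. y t j)) \<and>
  (\<forall>u\<in>{t1..t2}. \<forall>v\<in>{t1..t2}. \<forall>i<d. \<bar>x u i - x v i\<bar> \<le> E) \<and>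
  (\<forall>j<k. \<forall>i\<in>f j. \<forall>a b. t1 \<le> a \<and> a \<le> b \<and> b \<le> t2 \<and> (\<forall>u. a<u \<and> u<b \<longrightarrow> \<delta> < w u i) \<longrightarrow> y b j = y a j)"

lemma good_mono:
  assumes "good d k R f \<delta> E t1 t2 w x y" "t1 \<le> s" "s \<le> t" "t \<le> t2" "j < k"
  shows "y s j \<le> y t j"
  using assms unfolding good_def by (auto intro: mono_onD)

lemma good_const:
  assumes "good d k R f \<delta> E t1 t2 w x y" "t1 \<le> s" "s \<le> u" "u \<le> v" "v \<le> t" "t \<le> t2" "j < k"
    "y t j = y s j"
  shows "y v j = y u j"
proof -
  have "y s j \<le> y u j" "y u j \<le> y v j" "y v j \<le> y t j"
    using good_mono[OF assms(1), of s u j] good_mono[OF assms(1), of u v j] good_mono[OF assms(1), of v t j] assms by auto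
  then show ?thesis using assms(8) by linarith
qed

lemma good_E: "good d k R f \<delta> E t1 t2 w x y \<Longrightarrow> 0 < E"
  unfolding good_def by auto

lemma good_w_change:
  assumes g: "good d k R f \<delta> E t1 t2 w x y" and "t1 \<le> s" "s \<le> t" "t \<le> t2" "i < d"
  shows "\<bar>w t i - w s i\<bar> \<le> E + (\<Sum>i<d. \<Sum>j<k. \<bar>R i j\<bar>) * (\<Sum>j<k. y t j - y s j)"
proof -
  let ?Rm = "(\<Sum>i<d. \<Sum>j<k. \<bar>R i j\<bar>)"
  have sd: "(\<Sum>j<k. R i j * (y t j - y s j)) = (\<Sum>j<k. R i j * y t j) - (\<Sum>j<k. R i j * y s j)"
    by (simp add: right_diff_distrib sum_subtractf)
  have eq: "w t i - w s i = (x t i - x s i) + (\<Sum>j<k. R i j * (y t j - y s j))"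
    using g assms unfolding sd good_def by auto
  have x: "\<bar>x t i - x s i\<bar> \<le> E" using g assms unfolding good_def by auto
  have Rb: "\<bar>R i j\<bar> \<le> ?Rm" if "j < k" for j
  proof -
    have "\<bar>R i j\<bar> \<le> (\<Sum>j<k. \<bar>R i j\<bar>)" by (rule member_le_sum) (use that in auto)
    also have "\<dots> \<le> ?Rm" by (rule member_le_sum[where f="\<lambda>i. \<Sum>j<k. \<bar>R i j\<bar>"]) (use assms in auto)
    finally show ?thesis .
  qed
  have "\<bar>\<Sum>j<k. R i j * (y t j - y s j)\<bar> \<le> (\<Sum>j<k. \<bar>R i j * (y t j - y s j)\<bar>)"
    by (rule sum_abs)
  also have "\<dots> \<le> (\<Sum>j<k. ?Rm * (y t j - y s j))"
  proof (rule sum_mono)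
    fix j assume "j \<in> {..<k}"
    then have "0 \<le> y t j - y s j" using good_mono[OF g] assms by auto
    then show "\<bar>R i j * (y t j - y s j)\<bar> \<le> ?Rm * (y t j - y s j)"
      using Rb \<open>j \<in> {..<k}\<close> by (simp add: abs_mult mult_right_mono)
  qed
  also have "\<dots> = ?Rm * (\<Sum>j<k. y t j - y s j)" by (simp add: sum_distrib_left)
  finally show ?thesis using eq x by linarith
qed

lemma good_L:
  assumes g: "good d k R f \<delta> E t1 t2 w x y" and "t1 \<le> s" "s \<le> t" "t \<le> t2"
    and I: "I \<subseteq> {..<d}" and lam: "\<forall>i\<in>I. lam i > 0"
    and lamR: "\<forall>j\<in>J_set k f I. (\<Sum>i\<in>I. lam i * R i j) \<ge> 1"
    and cst: "\<forall>j<k. j \<notin> J_set k f I \<longrightarrow> y t j = y s j"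
  shows "(\<Sum>j<k. y t j - y s j) \<le> (\<Sum>i\<in>I. lam i * w t i) - (\<Sum>i\<in>I. lam i * w s i) + (\<Sum>i\<in>I. lam i) * E"
proof -
  have wi: "w t i - w s i = (x t i - x s i) + (\<Sum>j<k. R i j * (y t j - y s j))" if "i \<in> I" for i
  proof -
    have sd: "(\<Sum>j<k. R i j * (y t j - y s j)) = (\<Sum>j<k. R i j * y t j) - (\<Sum>j<k. R i j * y s j)"
      by (simp add: right_diff_distrib sum_subtractf)
    show ?thesis using g assms that unfolding sd good_def by auto
  qed
  have "(\<Sum>i\<in>I. lam i * w t i) - (\<Sum>i\<in>I. lam i * w s i) = (\<Sum>i\<in>I. lam i * (w t i - w s i))"
    by (simp add: sum_subtractf[symmetric] algebra_simps)
  also have "\<dots> = (\<Sum>i\<in>I. lam i * (x t i - x s i)) + (\<Sum>i\<in>I. \<Sum>j<k. lam i * R i j * (y t j - y s j))"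
    by (simp add: wi sum.distrib[symmetric] distrib_left sum_distrib_left mult.assoc)
  also have "(\<Sum>i\<in>I. \<Sum>j<k. lam i * R i j * (y t j - y s j)) = (\<Sum>j<k. (\<Sum>i\<in>I. lam i * R i j) * (y t j - y s j))"
    by (simp add: sum.swap[of _ I] sum_distrib_right)
  finally have eq: "(\<Sum>i\<in>I. lam i * w t i) - (\<Sum>i\<in>I. lam i * w s i) =
     (\<Sum>i\<in>I. lam i * (x t i - x s i)) + (\<Sum>j<k. (\<Sum>i\<in>I. lam i * R i j) * (y t j - y s j))" .
  have "(\<Sum>i\<in>I. lam i * (x t i - x s i)) \<ge> (\<Sum>i\<in>I. - (lam i * E))"
  proof (rule sum_mono)
    fix i assume i: "i \<in> I"
    then have "\<bar>x t i - x s i\<bar> \<le> E" using g assms unfolding good_def by auto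
    then have "- E \<le> x t i - x s i" by linarith
    then show "- (lam i * E) \<le> lam i * (x t i - x s i)"
      using lam i mult_left_mono[of "-E" "x t i - x s i" "lam i"] by auto
  qed
  then have xb: "(\<Sum>i\<in>I. lam i * (x t i - x s i)) \<ge> - ((\<Sum>i\<in>I. lam i) * E)"
    by (simp add: sum_negf sum_distrib_right)
  have "(\<Sum>j<k. y t j - y s j) \<le> (\<Sum>j<k. (\<Sum>i\<in>I. lam i * R i j) * (y t j - y s j))"
  proof (rule sum_mono)
    fix j assume j: "j \<in> {..<k}"
    show "y t j - y s j \<le> (\<Sum>i\<in>I. lam i * R i j) * (y t j - y s j)"
    proof (cases "j \<in> J_set k f I")
      case True
      have "0 \<le> y t j - y s j" using good_mono[OF g] assms j by auto
      then show ?thesis using lamR True mult_right_mono[of 1 "(\<Sum>i\<in>I. lam i * R i j)" "y t j - y s j"] by auto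
    next
      case False then show ?thesis using cst j by auto
    qed
  qed
  then show ?thesis using eq xb by linarith
qed


definition pushbound :: "nat \<Rightarrow> nat \<Rightarrow> (nat\<Rightarrow>nat\<Rightarrow>real) \<Rightarrow> (nat \<Rightarrow> nat set) \<Rightarrow> nat set \<Rightarrow> real \<Rightarrow> bool" where
"pushbound d k R f I C \<longleftrightarrow> (\<forall>\<delta> E t1 t2 w x y s t. good d k R f \<delta> E t1 t2 w x y \<and> t1 \<le> s \<and> s \<le> t \<and> t \<le> t2 \<and>
   (\<forall>j<k. j \<notin> J_set k f I \<longrightarrow> y t j = y s j) \<longrightarrow> (\<Sum>j<k. y t j - y s j) \<le> C * E)"

lemma tail:
  assumes g: "good d k R f \<delta> E t1 t2 w x y" and I: "I \<subseteq> {..<d}" and i: "i \<in> I"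
    and a: "t1 \<le> a" "a \<le> t" "t \<le> t2"
    and cst: "\<forall>j<k. j \<notin> J_set k f I \<longrightarrow> y t j = y a j"
    and IH: "pushbound d k R f (I - {i}) Ci" and Ci: "Ci \<ge> 0"
    and high: "w a i \<ge> (3 + (\<Sum>i<d. \<Sum>j<k. \<bar>R i j\<bar>) * Ci) * E"
  shows "(\<Sum>j<k. y t j - y a j) \<le> Ci * E"
proof -
  let ?Rm = "(\<Sum>i<d. \<Sum>j<k. \<bar>R i j\<bar>)"
  have Rm: "?Rm \<ge> 0" by (intro sum_nonneg) auto
  have E: "0 < E" "\<delta> \<le> E" "0 < \<delta>" using g unfolding good_def by auto
  have id: "i < d" using I i by auto
  have key: "(\<Sum>j<k. y b j - y a j) \<le> Ci*E \<and> w b i > \<delta>"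
    if b: "a \<le> b" "b \<le> t" and hw: "\<forall>u. a<u \<and> u<b \<longrightarrow> \<delta> < w u i" for b
  proof -
    have cond: "\<forall>j<k. j \<notin> J_set k f (I-{i}) \<longrightarrow> y b j = y a j"
    proof (intro allI impI)
      fix j assume j: "j < k" "j \<notin> J_set k f (I-{i})"
      show "y b j = y a j"
      proof (cases "j \<in> J_set k f I")
        case False
        then show ?thesis using good_const[OF g, of a a b t j] cst a b j by auto
      next
        case True
        then have "i \<in> f j" using j unfolding J_set_def by auto
        then show ?thesis using g j a b hw unfolding good_def by auto
      qed
    qed
    have sb: "(\<Sum>j<k. y b j - y a j) \<le> Ci*E"
    proof -
      have "b \<le> t2" using a b by auto
      then show ?thesis using IH g a b cond unfolding pushbound_def by blast
    qed
    have "\<bar>w b i - w a i\<bar> \<le> E + ?Rm * (\<Sum>j<k. y b j - y a j)"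
      using good_w_change[OF g, of a b i] a b id by auto
    moreover have "?Rm * (\<Sum>j<k. y b j - y a j) \<le> ?Rm * (Ci * E)"
      using sb Rm by (rule mult_left_mono)
    ultimately have "w b i \<ge> w a i - E - ?Rm * Ci * E" by auto
    moreover have "w a i - E - ?Rm * Ci * E \<ge> 2 * E" using high by (simp add: algebra_simps)
    ultimately show ?thesis using sb E by auto
  qed
  have all: "\<forall>b\<in>{a..t}. w b i > \<delta>"
  proof (rule ccontr)
    assume "\<not> ?thesis"
    then obtain b where b: "b \<in> {a..t}" "w b i \<le> \<delta>" by auto
    define T where "T = {b\<in>{a..t}. w b i \<le> \<delta>}"
    have cont: "continuous_on {a..t} (\<lambda>b. w b i)"
      using g id a unfolding good_def by (auto intro: continuous_on_subset)
    have cT: "closed T" unfolding T_def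
      by (rule continuous_on_closed_Collect_le[OF cont continuous_on_const]) auto
    have neT: "T \<noteq> {}" using b T_def by auto
    have bdT: "bdd_below T" unfolding T_def by (auto intro: bdd_belowI[of _ a])
    define b0 where "b0 = Inf T"
    have b0T: "b0 \<in> T" using closed_contains_Inf[OF neT bdT cT] b0_def by simp
    have hw: "\<forall>u. a<u \<and> u<b0 \<longrightarrow> \<delta> < w u i"
    proof (intro allI impI)
      fix u assume u: "a < u \<and> u < b0"
      have "u \<notin> T" using cInf_lower[OF _ bdT, of u] u b0_def by auto
      moreover have "u \<in> {a..t}" using u b0T T_def by auto
      ultimately show "\<delta> < w u i" using T_def by auto
    qed
    have "w b0 i > \<delta>" using key[of b0] b0T hw T_def by auto
    then show False using b0T T_def by auto
  qed
  show ?thesis using key[of t] all a by auto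
qed


lemma main_step:
  assumes f_ne: "\<forall>j<k. f j \<noteq> {}" and wcs: "weakly_completely_S d k R f"
    and fin: "finite I" and I: "I \<subseteq> {..<d}"
    and IH: "\<And>B. B \<subset> I \<Longrightarrow> \<exists>C\<ge>0. pushbound d k R f B C"
  shows "\<exists>C\<ge>0. pushbound d k R f I C"
proof (cases "I = {}")
  case True
  have "J_set k f {} = {}" using f_ne unfolding J_set_def by auto
  then have "pushbound d k R f I 0" unfolding pushbound_def True by auto
  then show ?thesis by auto
next
  case False
  have "\<forall>i\<in>I. \<exists>C. C \<ge> 0 \<and> pushbound d k R f (I - {i}) C"
    using IH by blast
  then obtain Cf where Cf: "\<And>i. i \<in> I \<Longrightarrow> Cf i \<ge> 0 \<and> pushbound d k R f (I - {i}) (Cf i)"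
    by metis
  define Cm where "Cm = (\<Sum>i\<in>I. Cf i)"
  have Cm0: "Cm \<ge> 0" unfolding Cm_def using Cf by (auto intro: sum_nonneg)
  have Cfm: "Cf i \<le> Cm" if "i \<in> I" for i
    unfolding Cm_def using Cf fin that by (auto intro: member_le_sum)
  obtain lam where lam: "\<forall>i\<in>I. lam i > 0" and lamR: "\<forall>j\<in>J_set k f I. (\<Sum>i\<in>I. lam i * R i j) \<ge> 1"
    using wcs False I unfolding weakly_completely_S_def by blast
  define Lm where "Lm = (\<Sum>i\<in>I. lam i)"
  have Lm0: "Lm \<ge> 0" unfolding Lm_def using lam by (auto intro: sum_nonneg less_imp_le)
  define Rm where "Rm = (\<Sum>i<d. \<Sum>j<k. \<bar>R i j\<bar>)"
  have Rm: "Rm \<ge> 0" unfolding Rm_def by (intro sum_nonneg) auto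
  define M where "M = 3 + Rm * Cm"
  have M0: "M \<ge> 0" unfolding M_def using Rm Cm0 by auto
  define C where "C = Lm * (M + 1) + Cm"
  have "pushbound d k R f I C"
    unfolding pushbound_def
  proof (intro allI impI, elim conjE)
    fix \<delta> E t1 t2 w x y s t
    assume g: "good d k R f \<delta> E t1 t2 w x y" and st: "t1 \<le> s" "s \<le> t" "t \<le> t2"
      and cst: "\<forall>j<k. j \<notin> J_set k f I \<longrightarrow> y t j = y s j"
    have E: "0 < E" using good_E[OF g] .
    have split: "(\<Sum>j<k. y t j - y s j) = (\<Sum>j<k. y t j - y a j) + (\<Sum>j<k. y a j - y s j)" for a
      by (simp add: sum.distrib[symmetric])
    have cst2: "\<forall>j<k. j \<notin> J_set k f I \<longrightarrow> y v j = y u j" if "s \<le> u" "u \<le> v" "v \<le> t" for u v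
      using good_const[OF g, of s u v t] st cst that by auto
    have low: "(\<Sum>j<k. y u j - y s j) \<le> Lm * (M + 1) * E"
      if u: "s \<le> u" "u \<le> t" and lw: "\<forall>i\<in>I. w u i \<le> M * E" for u
    proof -
      have "(\<Sum>j<k. y u j - y s j) \<le> (\<Sum>i\<in>I. lam i * w u i) - (\<Sum>i\<in>I. lam i * w s i) + Lm * E"
        unfolding Lm_def
        by (rule good_L[OF g _ _ _ I lam lamR]) (use st u cst2[of s u] in auto)
      moreover have "(\<Sum>i\<in>I. lam i * w u i) \<le> (\<Sum>i\<in>I. lam i * (M * E))"
      proof (rule sum_mono)
        fix i assume "i \<in> I"
        then show "lam i * w u i \<le> lam i * (M * E)"
          using lw lam by (intro mult_left_mono) (auto simp: less_imp_le)
      qed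
      moreover have "(\<Sum>i\<in>I. lam i * w s i) \<ge> 0"
      proof (rule sum_nonneg)
        fix i assume i: "i \<in> I"
        have "0 \<le> w s i" using g st I i unfolding good_def by auto
        then show "0 \<le> lam i * w s i" using lam i by (simp add: less_imp_le)
      qed
      moreover have "(\<Sum>i\<in>I. lam i * (M * E)) = Lm * M * E" unfolding Lm_def
        by (simp add: sum_distrib_right mult.assoc)
      ultimately show ?thesis by (simp add: algebra_simps)
    qed
    have highp: "(\<Sum>j<k. y t j - y a j) \<le> Cm * E"
      if a: "s \<le> a" "a \<le> t" and i: "i \<in> I" and hw: "M * E \<le> w a i" for a i
    proof -
      have "(3 + Rm * Cf i) * E \<le> M * E"
        unfolding M_def using Cfm[OF i] Rm E by (auto intro!: mult_right_mono mult_left_mono)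
      then have hh: "(3 + (\<Sum>i<d. \<Sum>j<k. \<bar>R i j\<bar>) * Cf i) * E \<le> w a i"
        using hw unfolding Rm_def by linarith
      have c2: "\<forall>j<k. j \<notin> J_set k f I \<longrightarrow> y t j = y a j" using cst2[of a t] a by auto
      have "t1 \<le> a" using st a by linarith
      then have "(\<Sum>j<k. y t j - y a j) \<le> Cf i * E"
        by (rule tail[OF g I i _ a(2) st(3) c2 conjunct2[OF Cf[OF i]] conjunct1[OF Cf[OF i]] hh])
      also have "\<dots> \<le> Cm * E" using Cfm[OF i] E by (auto intro: mult_right_mono)
      finally show ?thesis .
    qed
    have CE1: "Lm * (M + 1) * E \<ge> 0" using Lm0 M0 E by auto
    have CE2: "Cm * E \<ge> 0" using Cm0 E by auto
    define S where "S = {u\<in>{s..t}. \<forall>i\<in>I. w u i \<le> M * E}"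
    define S' where "S' = {u\<in>{s..t}. \<exists>i\<in>I. M * E \<le> w u i}"
    have cont: "continuous_on {s..t} (\<lambda>u. w u i)" if "i \<in> I" for i
    proof -
      have "continuous_on {t1..t2} (\<lambda>u. w u i)" using g I that unfolding good_def by auto
      moreover have "{s..t} \<subseteq> {t1..t2}" using st by auto
      ultimately show ?thesis by (rule continuous_on_subset)
    qed
    have cS: "closed S"
    proof -
      have "S = {s..t} \<inter> (\<Inter>i\<in>I. {u\<in>{s..t}. w u i \<le> M * E})" unfolding S_def using False by auto
      moreover have "closed {u\<in>{s..t}. w u i \<le> M * E}" if "i \<in> I" for i
        by (rule continuous_on_closed_Collect_le[OF cont[OF that] continuous_on_const]) auto
      ultimately show ?thesis by auto
    qed
    have cS': "closed S'"
    proof -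
      have "S' = (\<Union>i\<in>I. {u\<in>{s..t}. M * E \<le> w u i})" unfolding S'_def by auto
      moreover have "closed {u\<in>{s..t}. M * E \<le> w u i}" if "i \<in> I" for i
        by (rule continuous_on_closed_Collect_le[OF continuous_on_const cont[OF that]]) auto
      ultimately show ?thesis using fin by auto
    qed
    show "(\<Sum>j<k. y t j - y s j) \<le> C * E"
    proof (cases "S = {}")
      case True
      then obtain i where "i \<in> I" "M * E \<le> w s i" using st unfolding S_def by force
      then have "(\<Sum>j<k. y t j - y s j) \<le> Cm * E" using highp[of s i] st by auto
      then show ?thesis unfolding C_def using CE1 by (simp add: algebra_simps)
    next
      case ne: False
      have bdS: "bdd_above S" unfolding S_def by (auto intro: bdd_aboveI[of _ t])
      define a where "a = Sup S"
      have aS: "a \<in> S" using closed_contains_Sup[OF ne bdS cS] a_def by simp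
      have la: "(\<Sum>j<k. y a j - y s j) \<le> Lm * (M + 1) * E" using low[of a] aS S_def by auto
      show ?thesis
      proof (cases "a = t")
        case True
        then show ?thesis using la CE2 unfolding C_def by (simp add: algebra_simps)
      next
        case at: False
        then have alt: "a < t" using aS S_def by auto
        have "{a<..t} \<subseteq> S'"
        proof
          fix u assume u: "u \<in> {a<..t}"
          then have "u \<notin> S" using cSup_upper[OF _ bdS, of u] a_def by auto
          then show "u \<in> S'" using u aS unfolding S_def S'_def by force
        qed
        then have "closure {a<..t} \<subseteq> S'" using cS' by (rule closure_minimal)
        then have "a \<in> S'" using alt by auto
        then obtain i where i: "i \<in> I" "M * E \<le> w a i" unfolding S'_def by auto
        have "(\<Sum>j<k. y t j - y a j) \<le> Cm * E" using highp[OF _ _ i] aS S_def by auto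
        then show ?thesis using la split[of a] unfolding C_def by (simp add: algebra_simps)
      qed
    qed
  qed
  moreover have "C \<ge> 0" unfolding C_def using Lm0 M0 Cm0 by auto
  ultimately show ?thesis by auto
qed

lemma main:
  assumes f_ne: "\<forall>j<k. f j \<noteq> {}" and wcs: "weakly_completely_S d k R f"
  shows "finite I \<Longrightarrow> I \<subseteq> {..<d} \<longrightarrow> (\<exists>C\<ge>0. pushbound d k R f I C)"
proof (induction I rule: finite_psubset_induct)
  case (psubset A)
  show ?case
  proof
    assume "A \<subseteq> {..<d}"
    then show "\<exists>C\<ge>0. pushbound d k R f A C"
      using main_step[OF f_ne wcs psubset(1)] psubset(2) by blast
  qed
qed



lemma push_zero:
  fixes g :: "real \<Rightarrow> real"
  assumes cont: "continuous_on {t1..t2} g" and mo: "mono_on {t1..t2} g"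
    and ab: "t1 \<le> a" "a \<le> b" "b \<le> t2"
    and int0: "(\<integral>\<^sup>+ s. indicator A s \<partial>LS_measure g t1 t2) = 0"
    and sub: "{a<..<b} \<subseteq> A"
  shows "g b = g a"
proof -
  define F where "F = (\<lambda>s. g (max t1 (min t2 s)))"
  have Fc: "continuous_on UNIV F" unfolding F_def
    by (rule continuous_on_compose2[OF cont, where f="\<lambda>s. max t1 (min t2 s)"])
       (use ab in \<open>auto intro!: continuous_intros\<close>)
  have Fm: "F u \<le> F v" if "u \<le> v" for u v
    unfolding F_def using ab that by (intro mono_onD[OF mo]) auto
  have Frc: "continuous (at_right u) F" for u
    using Fc by (simp add: continuous_on_eq_continuous_within continuous_at_imp_continuous_at_within)
  have FA: "F c = g c" if "t1 \<le> c" "c \<le> t2" for c unfolding F_def using that by auto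
  have lowc: "g c \<le> g a" if c: "a \<le> c" "c < b" for c
  proof -
    have "emeasure (interval_measure F) {a<..c} = (\<integral>\<^sup>+ s. indicator {a<..c} s \<partial>interval_measure F)"
      by (simp add: nn_integral_indicator)
    also have "\<dots> \<le> (\<integral>\<^sup>+ s. indicator A s \<partial>interval_measure F)"
      by (rule nn_integral_mono) (use sub c in \<open>auto split: split_indicator\<close>)
    also have "\<dots> = 0" using int0 unfolding LS_measure_def F_def .
    finally have "emeasure (interval_measure F) {a<..c} = 0" by simp
    moreover have "emeasure (interval_measure F) {a<..c} = F c - F a"
      by (rule emeasure_interval_measure_Ioc) (use c Fm Frc in auto)
    ultimately have "ennreal (F c - F a) = 0" by simp
    then have "F c - F a \<le> 0" using ennreal_eq_0_iff by blast
    then show ?thesis using FA c ab by auto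
  qed
  have "g b \<le> g a"
  proof (cases "a = b")
    case True then show ?thesis by simp
  next
    case False
    then have ab': "a < b" using ab by auto
    have cl: "closed {c\<in>{a..b}. g c \<le> g a}"
      by (rule continuous_on_closed_Collect_le[OF continuous_on_subset[OF cont] continuous_on_const])
         (use ab in auto)
    have "{a..<b} \<subseteq> {c\<in>{a..b}. g c \<le> g a}" using lowc by auto
    then have "closure {a..<b} \<subseteq> {c\<in>{a..b}. g c \<le> g a}" using cl by (rule closure_minimal)
    then have "{a..b} \<subseteq> {c\<in>{a..b}. g c \<le> g a}" using ab' by simp
    moreover have "b \<in> {a..b}" using ab' by auto
    ultimately show ?thesis by blast
  qed
  moreover have "g a \<le> g b" using mono_onD[OF mo] ab by auto
  ultimately show ?thesis by simp
qed

lemma Osc_bdd: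
  fixes g :: "real \<Rightarrow> nat \<Rightarrow> real"
  assumes cont: "\<forall>l<m. continuous_on {t1..t2} (\<lambda>t. g t l)"
  shows "bdd_above (insert 0 {\<bar>g t l - g s l\<bar> | s t l. t1 \<le> s \<and> s < t \<and> t \<le> t2 \<and> l < m})"
proof -
  have "\<forall>l<m. \<exists>B. \<forall>t\<in>{t1..t2}. \<bar>g t l\<bar> \<le> B"
  proof (intro allI impI)
    fix l assume "l < m"
    then have "compact ((\<lambda>t. g t l) ` {t1..t2})"
      using cont by (intro compact_continuous_image) auto
    then have "bounded ((\<lambda>t. g t l) ` {t1..t2})" by (rule compact_imp_bounded)
    then show "\<exists>B. \<forall>t\<in>{t1..t2}. \<bar>g t l\<bar> \<le> B" unfolding bounded_real by auto
  qed
  then obtain B where B: "\<And>l t. l < m \<Longrightarrow> t \<in> {t1..t2} \<Longrightarrow> \<bar>g t l\<bar> \<le> B l" by metis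
  define Bt where "Bt = (\<Sum>l<m. \<bar>B l\<bar>)"
  have Bl: "\<bar>B l\<bar> \<le> Bt" if "l < m" for l unfolding Bt_def by (rule member_le_sum) (use that in auto)
  have Bt0: "0 \<le> Bt" unfolding Bt_def by (auto intro: sum_nonneg)
  let ?S = "insert 0 {\<bar>g t l - g s l\<bar> | s t l. t1 \<le> s \<and> s < t \<and> t \<le> t2 \<and> l < m}"
  show "bdd_above ?S"
  proof (rule bdd_aboveI[of _ "2 * Bt"])
    fix z assume "z \<in> ?S"
    then show "z \<le> 2 * Bt"
    proof
      assume "z = 0" then show ?thesis using Bt0 by simp
    next
      assume "z \<in> {\<bar>g t l - g s l\<bar> | s t l. t1 \<le> s \<and> s < t \<and> t \<le> t2 \<and> l < m}"
      then obtain s t l where z: "z = \<bar>g t l - g s l\<bar>" "t1 \<le> s" "s < t" "t \<le> t2" "l < m" by blast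
      have "\<bar>g t l\<bar> \<le> Bt" "\<bar>g s l\<bar> \<le> Bt" using B[of l t] B[of l s] Bl[of l] z by auto
      then show ?thesis using z by linarith
    qed
  qed
qed

lemma Osc_nonneg:
  fixes g :: "real \<Rightarrow> nat \<Rightarrow> real"
  assumes cont: "\<forall>l<m. continuous_on {t1..t2} (\<lambda>t. g t l)"
  shows "0 \<le> Osc g m t1 t2"
  unfolding Osc_def by (rule cSup_upper[OF _ Osc_bdd[OF cont]]) simp

lemma Osc_le:
  fixes g :: "real \<Rightarrow> nat \<Rightarrow> real"
  assumes cont: "\<forall>l<m. continuous_on {t1..t2} (\<lambda>t. g t l)"
    and uv: "t1 \<le> u" "u \<le> t2" "t1 \<le> v" "v \<le> t2" and l: "l < m"
  shows "\<bar>g u l - g v l\<bar> \<le> Osc g m t1 t2"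
proof -
  have mem: "\<bar>g t l - g s l\<bar> \<le> Osc g m t1 t2" if "t1 \<le> s" "s < t" "t \<le> t2" for s t
    unfolding Osc_def by (rule cSup_upper[OF _ Osc_bdd[OF cont]]) (use that l in blast)
  have z: "0 \<le> Osc g m t1 t2" by (rule Osc_nonneg[OF cont])
  consider "u < v" | "u = v" | "v < u" by linarith
  then show ?thesis
  proof cases
    case 1 then show ?thesis using mem[of u v] uv by (simp add: abs_minus_commute)
  next
    case 2 then show ?thesis using z by simp
  next
    case 3 then show ?thesis using mem[of v u] uv by simp
  qed
qed

lemma Osc_bound:
  fixes g :: "real \<Rightarrow> nat \<Rightarrow> real"
  assumes "\<And>s t l. t1 \<le> s \<Longrightarrow> s < t \<Longrightarrow> t \<le> t2 \<Longrightarrow> l < m \<Longrightarrow> \<bar>g t l - g s l\<bar> \<le> B"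
    and "0 \<le> B"
  shows "Osc g m t1 t2 \<le> B"
  unfolding Osc_def by (rule cSup_least) (use assms in auto)


theorem proposition7p1:
  fixes d k :: nat and R :: "nat \<Rightarrow> nat \<Rightarrow> real" and f :: "nat \<Rightarrow> nat set"
  assumes "d \<le> k"
    and "\<And>j. j < k \<Longrightarrow> f j \<subseteq> {..<d}"
    and "\<And>j. j < k \<Longrightarrow> f j \<noteq> {}"
    and "\<And>i j. i < d \<Longrightarrow> j < k \<Longrightarrow> (f j = {i} \<longleftrightarrow> j = i)"
    and "weakly_completely_S d k R f"
  shows "\<exists>C>0. \<forall>(\<delta>::real) (t1::real) (t2::real) (w::real \<Rightarrow> nat \<Rightarrow> real)
           (x::real \<Rightarrow> nat \<Rightarrow> real) (y::real \<Rightarrow> nat \<Rightarrow> real).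
      \<delta> > 0 \<and> 0 \<le> t1 \<and> t1 < t2 \<and>
      (\<forall>i<d. continuous_on {t1..t2} (\<lambda>t. w t i)) \<and>
      (\<forall>i<d. continuous_on {t1..t2} (\<lambda>t. x t i)) \<and>
      (\<forall>j<k. continuous_on {t1..t2} (\<lambda>t. y t j)) \<and>
      (\<forall>t\<in>{t1..t2}. \<forall>i<d. w t i = x t i + (\<Sum>j<k. R i j * y t j)) \<and>
      (\<forall>t\<in>{t1..t2}. \<forall>i<d. w t i \<ge> 0) \<and>
      (\<forall>j<k. y t1 j \<ge> 0 \<and> mono_on {t1..t2} (\<lambda>t. y t j) \<and>
         (\<integral>\<^sup>+ s. indicator {s\<in>{t1..t2}. \<exists>i\<in>f j. w s i > \<delta>} s
            \<partial>LS_measure (\<lambda>t. y t j) t1 t2) = 0)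
      \<longrightarrow> Osc y k t1 t2 \<le> C * (Osc x d t1 t2 + \<delta>) \<and>
          Osc w d t1 t2 \<le> C * (Osc x d t1 t2 + \<delta>)"
proof -
  have f_ne: "\<forall>j<k. f j \<noteq> {}" using assms(3) by auto
  obtain C0 where C0: "C0 \<ge> 0" "pushbound d k R f {..<d} C0"
    using main[OF f_ne assms(5), of "{..<d}"] by auto
  have Jall: "J_set k f {..<d} = {..<k}" using assms(2) unfolding J_set_def by auto
  define Rm where "Rm = (\<Sum>i<d. \<Sum>j<k. \<bar>R i j\<bar>)"
  have Rm: "Rm \<ge> 0" unfolding Rm_def by (intro sum_nonneg) auto
  define C where "C = 1 + C0 + Rm * C0"
  have "Rm * C0 \<ge> 0" using C0(1) Rm by simp
  then have Cpos: "C > 0" unfolding C_def using C0(1) by linarith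
  have "\<forall>(\<delta>::real) (t1::real) (t2::real) (w::real \<Rightarrow> nat \<Rightarrow> real)
           (x::real \<Rightarrow> nat \<Rightarrow> real) (y::real \<Rightarrow> nat \<Rightarrow> real).
      \<delta> > 0 \<and> 0 \<le> t1 \<and> t1 < t2 \<and>
      (\<forall>i<d. continuous_on {t1..t2} (\<lambda>t. w t i)) \<and>
      (\<forall>i<d. continuous_on {t1..t2} (\<lambda>t. x t i)) \<and>
      (\<forall>j<k. continuous_on {t1..t2} (\<lambda>t. y t j)) \<and>
      (\<forall>t\<in>{t1..t2}. \<forall>i<d. w t i = x t i + (\<Sum>j<k. R i j * y t j)) \<and>
      (\<forall>t\<in>{t1..t2}. \<forall>i<d. w t i \<ge> 0) \<and>
      (\<forall>j<k. y t1 j \<ge> 0 \<and> mono_on {t1..t2} (\<lambda>t. y t j) \<and>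
         (\<integral>\<^sup>+ s. indicator {s\<in>{t1..t2}. \<exists>i\<in>f j. w s i > \<delta>} s
            \<partial>LS_measure (\<lambda>t. y t j) t1 t2) = 0)
      \<longrightarrow> Osc y k t1 t2 \<le> C * (Osc x d t1 t2 + \<delta>) \<and>
          Osc w d t1 t2 \<le> C * (Osc x d t1 t2 + \<delta>)"
  proof (intro allI impI, elim conjE)
    fix \<delta> t1 t2 :: real and w x y :: "real \<Rightarrow> nat \<Rightarrow> real"
    assume dl: "\<delta> > 0" and t1: "0 \<le> t1" and t12: "t1 < t2"
      and wc: "\<forall>i<d. continuous_on {t1..t2} (\<lambda>t. w t i)"
      and xc: "\<forall>i<d. continuous_on {t1..t2} (\<lambda>t. x t i)"
      and yc: "\<forall>j<k. continuous_on {t1..t2} (\<lambda>t. y t j)"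
      and weq: "\<forall>t\<in>{t1..t2}. \<forall>i<d. w t i = x t i + (\<Sum>j<k. R i j * y t j)"
      and wpos: "\<forall>t\<in>{t1..t2}. \<forall>i<d. w t i \<ge> 0"
      and yp: "\<forall>j<k. y t1 j \<ge> 0 \<and> mono_on {t1..t2} (\<lambda>t. y t j) \<and>
         (\<integral>\<^sup>+ s. indicator {s\<in>{t1..t2}. \<exists>i\<in>f j. w s i > \<delta>} s
            \<partial>LS_measure (\<lambda>t. y t j) t1 t2) = 0"
    define E where "E = Osc x d t1 t2 + \<delta>"
    have Ox0: "0 \<le> Osc x d t1 t2" by (rule Osc_nonneg[OF xc])
    have E0: "0 < E" "\<delta> \<le> E" unfolding E_def using Ox0 dl by auto
    have xE: "\<forall>u\<in>{t1..t2}. \<forall>v\<in>{t1..t2}. \<forall>i<d. \<bar>x u i - x v i\<bar> \<le> E"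
    proof (intro ballI allI impI)
      fix u v i assume "u \<in> {t1..t2}" "v \<in> {t1..t2}" "i < d"
      then have "\<bar>x u i - x v i\<bar> \<le> Osc x d t1 t2" using Osc_le[OF xc] by auto
      then show "\<bar>x u i - x v i\<bar> \<le> E" unfolding E_def using dl by linarith
    qed
    have P: "\<forall>j<k. \<forall>i\<in>f j. \<forall>a b. t1 \<le> a \<and> a \<le> b \<and> b \<le> t2 \<and> (\<forall>u. a<u \<and> u<b \<longrightarrow> \<delta> < w u i) \<longrightarrow> y b j = y a j"
    proof (intro allI impI ballI, elim conjE)
      fix j i a b assume j: "j < k" and i: "i \<in> f j" and ab: "t1 \<le> a" "a \<le> b" "b \<le> t2"
        and hw: "\<forall>u. a < u \<and> u < b \<longrightarrow> \<delta> < w u i"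
      have sub: "{a<..<b} \<subseteq> {s\<in>{t1..t2}. \<exists>i\<in>f j. w s i > \<delta>}"
        using hw ab i by auto
      show "y b j = y a j"
        by (rule push_zero[where g="\<lambda>t. y t j", OF _ _ ab _ sub]) (use yc yp j in auto)
    qed
    have g: "good d k R f \<delta> E t1 t2 w x y"
      unfolding good_def using dl E0 t12 wc weq wpos yp xE P by auto
    have push: "(\<Sum>j<k. y t j - y s j) \<le> C0 * E" if "t1 \<le> s" "s \<le> t" "t \<le> t2" for s t
      using C0(2) g that unfolding pushbound_def Jall by auto
    have C0E: "C0 * E \<le> C * E" unfolding C_def using E0 C0 Rm
      by (intro mult_right_mono) auto
    have "Osc y k t1 t2 \<le> C * E"
    proof (rule Osc_bound)
      fix s t l assume st: "t1 \<le> s" "s < t" "t \<le> t2" "l < k"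
      have nn: "\<And>j. j \<in> {..<k} \<Longrightarrow> 0 \<le> y t j - y s j" using good_mono[OF g] st by auto
      have "y t l - y s l \<le> (\<Sum>j<k. y t j - y s j)"
        by (rule member_le_sum[where f="\<lambda>j. y t j - y s j"]) (use nn st in auto)
      moreover have "0 \<le> y t l - y s l" using nn st by auto
      ultimately show "\<bar>y t l - y s l\<bar> \<le> C * E" using push[of s t] st C0E by auto
    next
      show "0 \<le> C * E" using Cpos E0 by auto
    qed
    moreover have "Osc w d t1 t2 \<le> C * E"
    proof (rule Osc_bound)
      fix s t l assume st: "t1 \<le> s" "s < t" "t \<le> t2" "l < d"
      have "\<bar>w t l - w s l\<bar> \<le> E + Rm * (\<Sum>j<k. y t j - y s j)"
        using good_w_change[OF g, of s t l] st unfolding Rm_def by auto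
      moreover have "Rm * (\<Sum>j<k. y t j - y s j) \<le> Rm * (C0 * E)"
        using push[of s t] st Rm by (intro mult_left_mono) auto
      moreover have "E + Rm * (C0 * E) \<le> C * E"
      proof -
        have "0 \<le> C0 * E" using C0(1) E0 by simp
        then show ?thesis unfolding C_def by (simp add: algebra_simps)
      qed
      ultimately show "\<bar>w t l - w s l\<bar> \<le> C * E" by linarith
    next
      show "0 \<le> C * E" using Cpos E0 by auto
    qed
    ultimately show "Osc y k t1 t2 \<le> C * (Osc x d t1 t2 + \<delta>) \<and> Osc w d t1 t2 \<le> C * (Osc x d t1 t2 + \<delta>)"
      unfolding E_def by auto
  qed
  then show ?thesis using Cpos by blast
qed

end
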